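(* Let $x_0\in\mathbb{R}\cup\{+\infty\}$, $T<x_0$, $I:=[T,x_0)$, let $\phi_1,\phi_2\in C^1(I)$ with $\phi_2(x)=o(\phi_1(x))$ as $x\to x_0$, $\phi_1(x)\neq0$, $\phi_2(x)\neq0$ and $W(\phi_1,\phi_2;x)\neq0$ for all $x\in I$, and let $f$ be absolutely continuous on every compact subinterval of $I$. Assume moreover $$\phi_2'(x)=o(\phi_1'(x)),\qquad \frac{\phi_1'(x)}{\phi_1(x)}=O\Big(\frac{\phi_2'(x)}{\phi_2(x)}\Big)\qquad(x\to x_0).$$ If, for real $a_1,a_2$, $$f(x)=a_1\phi_1(x)+a_2\phi_2(x)+o(\phi_2(x)),\qquad \Big(\frac{f(x)}{\phi_1(x)}\Big)'=a_2\Big(\frac{\phi_2(x)}{\phi_1(x)}\Big)'+o\Big(\Big(\frac{\phi_2(x)}{\phi_1(x)}\Big)'\Big)\qquad(x\to x_0),$$ then $f'(x)=a_1\phi_1'(x)+a_2\phi_2'(x)+o(\phi_2'(x))$ as $x\to x_0$ (together with $f(x)=a_1\phi_1(x)+a_2\phi_2(x)+o(\phi_2(x))$).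
   Context: Limits and $O,o$ relations as $x\to x_0$ are taken for $x<x_0$, over points where the functions are defined (e.g. where $f$ is differentiable). $W(g,h;x):=g(x)h'(x)-g'(x)h(x)$. *)

theory Defs
  imports "HOL-Analysis.Analysis" "HOL-Library.Landau_Symbols"
begin

definition abs_continuous_on :: "real set \<Rightarrow> (real \<Rightarrow> real) \<Rightarrow> bool" where
  "abs_continuous_on S f \<longleftrightarrow>
     (\<forall>e>0. \<exists>d>0. \<forall>(n::nat) (a::nat \<Rightarrow> real) b.
        (\<forall>k<n. a k \<le> b k \<and> {a k..b k} \<subseteq> S) \<and>
        (\<forall>i<n. \<forall>j<n. i \<noteq> j \<longrightarrow> b i \<le> a j \<or> b j \<le> a i) \<and>
        (\<Sum>k<n. b k - a k) < d
        \<longrightarrow> (\<Sum>k<n. \<bar>f (b k) - f (a k)\<bar>) < e)"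

definition approach_from_left :: "ereal \<Rightarrow> real filter" where
  "approach_from_left x0 = (if x0 = \<infinity> then at_top else at_left (real_of_ereal x0))"

definition wronskian :: "(real \<Rightarrow> real) \<Rightarrow> (real \<Rightarrow> real) \<Rightarrow> (real \<Rightarrow> real) \<Rightarrow> (real \<Rightarrow> real) \<Rightarrow> real \<Rightarrow> real" where
  "wronskian g g' h h' x = g x * h' x - g' x * h x"

end

theory Submission imports Defs begin
lemma key:
  fixes p1 p2 q1 q2 fx dg e C a1 a2 :: real
  assumes p1: "p1 \<noteq> 0" and p2: "p2 \<noteq> 0" and C: "C > 0" and e: "e > 0"
    and h1: "\<bar>fx - a1*p1 - a2*p2\<bar> \<le> e * \<bar>p2\<bar>"
    and h2: "\<bar>q1/p1\<bar> \<le> C * \<bar>q2/p2\<bar>"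
    and h3: "\<bar>dg - a2 * ((q2*p1 - p2*q1)/p1^2)\<bar> \<le> e * \<bar>(q2*p1 - p2*q1)/p1^2\<bar>"
  shows "\<bar>(dg*p1 + (fx/p1)*q1) - a1*q1 - a2*q2\<bar> \<le> e*(2*C+1) * \<bar>q2\<bar>"
proof -
  define r where "r = (fx - a1*p1 - a2*p2)/p1"
  define s where "s = dg - a2 * ((q2*p1 - p2*q1)/p1^2)"
  have E: "(dg*p1 + (fx/p1)*q1) - a1*q1 - a2*q2 = s*p1 + r*q1"
    using p1 unfolding r_def s_def by (simp add: field_simps power2_eq_square)
  have "\<bar>r*q1\<bar> = \<bar>fx - a1*p1 - a2*p2\<bar> * \<bar>q1/p1\<bar>"
    unfolding r_def by (simp add: abs_mult abs_divide)
  also have "\<dots> \<le> (e*\<bar>p2\<bar>) * (C*\<bar>q2/p2\<bar>)"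
    using e by (intro mult_mono h1 h2) auto
  also have "\<dots> = e*C*\<bar>q2\<bar>" using p2 by (simp add: abs_divide)
  finally have A: "\<bar>r*q1\<bar> \<le> e*C*\<bar>q2\<bar>" .
  have "\<bar>s*p1\<bar> \<le> e * \<bar>(q2*p1 - p2*q1)/p1^2\<bar> * \<bar>p1\<bar>"
    unfolding s_def abs_mult by (intro mult_right_mono h3) auto
  also have "\<dots> = e * \<bar>q2 - p2*(q1/p1)\<bar>"
  proof -
    have "(q2*p1 - p2*q1)/p1^2 * p1 = q2 - p2*(q1/p1)"
      using p1 by (simp add: field_simps power2_eq_square)
    hence "\<bar>(q2*p1 - p2*q1)/p1^2\<bar> * \<bar>p1\<bar> = \<bar>q2 - p2*(q1/p1)\<bar>"
      by (metis abs_mult)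
    thus ?thesis by (metis mult.assoc)
  qed
  also have "\<dots> \<le> e * (\<bar>q2\<bar> + C*\<bar>q2\<bar>)"
  proof -
    have "\<bar>p2*(q1/p1)\<bar> \<le> \<bar>p2\<bar> * (C*\<bar>q2/p2\<bar>)" unfolding abs_mult
      by (intro mult_left_mono h2) auto
    also have "\<dots> = C*\<bar>q2\<bar>" using p2 by (simp add: abs_divide)
    finally have "\<bar>q2 - p2*(q1/p1)\<bar> \<le> \<bar>q2\<bar> + C*\<bar>q2\<bar>" by linarith
    thus ?thesis using e by simp
  qed
  finally have B: "\<bar>s*p1\<bar> \<le> e * (\<bar>q2\<bar> + C*\<bar>q2\<bar>)" .
  show ?thesis unfolding E using A B by (simp add: algebra_simps)
qed
theorem proposition9p2:
  fixes x0 :: ereal and T a1 a2 :: real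
    and \<phi>1 \<phi>1' \<phi>2 \<phi>2' f :: "real \<Rightarrow> real"
  defines "I \<equiv> {x. T \<le> x \<and> ereal x < x0}"
  defines "F \<equiv> approach_from_left x0"
  defines "D \<equiv> {x. f differentiable (at x)}"
  assumes Tx0: "ereal T < x0"
    and d1: "\<And>x. x \<in> I \<Longrightarrow> (\<phi>1 has_real_derivative \<phi>1' x) (at x within I)"
    and c1: "continuous_on I \<phi>1'"
    and d2: "\<And>x. x \<in> I \<Longrightarrow> (\<phi>2 has_real_derivative \<phi>2' x) (at x within I)"
    and c2: "continuous_on I \<phi>2'"
    and small: "\<phi>2 \<in> o[F](\<phi>1)"
    and nz1: "\<And>x. x \<in> I \<Longrightarrow> \<phi>1 x \<noteq> 0"
    and nz2: "\<And>x. x \<in> I \<Longrightarrow> \<phi>2 x \<noteq> 0"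
    and nzW: "\<And>x. x \<in> I \<Longrightarrow> wronskian \<phi>1 \<phi>1' \<phi>2 \<phi>2' x \<noteq> 0"
    and ac: "\<And>a b. {a..b} \<subseteq> I \<Longrightarrow> abs_continuous_on {a..b} f"
    and small': "\<phi>2' \<in> o[F](\<phi>1')"
    and bigO: "(\<lambda>x. \<phi>1' x / \<phi>1 x) \<in> O[F](\<lambda>x. \<phi>2' x / \<phi>2 x)"
    and asym: "(\<lambda>x. f x - a1 * \<phi>1 x - a2 * \<phi>2 x) \<in> o[F](\<phi>2)"
    and asym_d: "(\<lambda>x. deriv (\<lambda>y. f y / \<phi>1 y) x - a2 * deriv (\<lambda>y. \<phi>2 y / \<phi>1 y) x)
                   \<in> o[inf F (principal D)](\<lambda>x. deriv (\<lambda>y. \<phi>2 y / \<phi>1 y) x)"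
  shows "(\<lambda>x. deriv f x - a1 * \<phi>1' x - a2 * \<phi>2' x) \<in> o[inf F (principal D)](\<phi>2')
         \<and> (\<lambda>x. f x - a1 * \<phi>1 x - a2 * \<phi>2 x) \<in> o[F](\<phi>2)"
proof -
  have Fev: "eventually (\<lambda>x. T < x \<and> ereal x < x0) F"
    proof (cases "x0 = \<infinity>")
      case True
      hence "F = at_top" unfolding F_def approach_from_left_def by simp
      moreover have "eventually (\<lambda>x. T < x) (at_top::real filter)"
        by (rule eventually_gt_at_top)
      ultimately show ?thesis using True by auto
    next
      case False
      with Tx0 obtain c where c: "x0 = ereal c" by (cases x0) auto
      hence "F = at_left c" unfolding F_def approach_from_left_def by simp
      moreover have "T < c" using Tx0 c by simp
      ultimately have "eventually (\<lambda>x. x \<in> {T<..<c}) F" using eventually_at_left_real by blast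
      thus ?thesis using c by (auto elim: eventually_mono)
    qed
  have int: "x \<in> interior I" if "T < x" "ereal x < x0" for x
  proof (cases "x0 = \<infinity>")
    case True
    have "{T<..} \<subseteq> I" unfolding I_def using True by auto
    moreover have "x \<in> {T<..}" using that by simp
    ultimately show ?thesis by (meson interior_maximal open_greaterThan subsetD)
  next
    case False
    with Tx0 obtain c where c: "x0 = ereal c" by (cases x0) auto
    have "{T<..<c} \<subseteq> I" unfolding I_def using c by auto
    moreover have "x \<in> {T<..<c}" using that c by simp
    ultimately show ?thesis by (meson interior_maximal open_greaterThanLessThan subsetD)
  qed
  obtain C0 where C0: "C0 > 0" "eventually (\<lambda>x. norm (\<phi>1' x / \<phi>1 x) \<le> C0 * norm (\<phi>2' x / \<phi>2 x)) F"
    using landau_o.bigE[OF bigO] by blast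
  have part1: "(\<lambda>x. deriv f x - a1 * \<phi>1' x - a2 * \<phi>2' x) \<in> o[inf F (principal D)](\<phi>2')"
  proof (rule landau_o.smallI)
    fix c :: real assume c: "c > 0"
    define e where "e = c / (2*C0+1)"
    have e: "e > 0" using c C0 unfolding e_def by simp
    have ce: "e*(2*C0+1) = c" using C0 unfolding e_def by simp
    have E1: "eventually (\<lambda>x. norm (f x - a1 * \<phi>1 x - a2 * \<phi>2 x) \<le> e * norm (\<phi>2 x)) F"
      using landau_o.smallD[OF asym e] .
    have E3: "eventually (\<lambda>x. norm (deriv (\<lambda>y. f y / \<phi>1 y) x - a2 * deriv (\<lambda>y. \<phi>2 y / \<phi>1 y) x)
        \<le> e * norm (deriv (\<lambda>y. \<phi>2 y / \<phi>1 y) x)) (inf F (principal D))"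
      using landau_o.smallD[OF asym_d e] .
    hence E3': "eventually (\<lambda>x. x \<in> D \<longrightarrow> norm (deriv (\<lambda>y. f y / \<phi>1 y) x - a2 * deriv (\<lambda>y. \<phi>2 y / \<phi>1 y) x)
        \<le> e * norm (deriv (\<lambda>y. \<phi>2 y / \<phi>1 y) x)) F"
      by (simp add: eventually_inf_principal)
    have "eventually (\<lambda>x. x \<in> D \<longrightarrow> norm (deriv f x - a1 * \<phi>1' x - a2 * \<phi>2' x) \<le> c * norm (\<phi>2' x)) F"
      using Fev E1 E3' C0(2)
    proof eventually_elim
      case (elim x)
      show ?case
      proof
        assume xD: "x \<in> D"
        have xI: "x \<in> I" using elim(1) unfolding I_def by auto
        have xint: "x \<in> interior I" using int elim(1) by blast
        have at: "at x within I = at x" by (rule at_within_interior[OF xint])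
        have D1: "(\<phi>1 has_real_derivative \<phi>1' x) (at x)" using d1[OF xI] at by simp
        have D2: "(\<phi>2 has_real_derivative \<phi>2' x) (at x)" using d2[OF xI] at by simp
        have Df: "(f has_real_derivative deriv f x) (at x)"
          using xD unfolding D_def by (simp add: DERIV_deriv_iff_real_differentiable)
        have p1: "\<phi>1 x \<noteq> 0" and p2: "\<phi>2 x \<noteq> 0" using nz1 nz2 xI by auto
        have dg: "deriv (\<lambda>y. f y / \<phi>1 y) x = (deriv f x * \<phi>1 x - f x * \<phi>1' x) / (\<phi>1 x * \<phi>1 x)"
          by (rule DERIV_imp_deriv, rule DERIV_divide[OF Df D1 p1])
        have du0: "deriv (\<lambda>y. \<phi>2 y / \<phi>1 y) x = (\<phi>2' x * \<phi>1 x - \<phi>2 x * \<phi>1' x) / (\<phi>1 x * \<phi>1 x)"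
          by (rule DERIV_imp_deriv, rule DERIV_divide[OF D2 D1 p1])
        have du: "deriv (\<lambda>y. \<phi>2 y / \<phi>1 y) x = (\<phi>2' x * \<phi>1 x - \<phi>2 x * \<phi>1' x) / (\<phi>1 x)^2"
          unfolding du0 power2_eq_square ..
        have eq: "deriv f x = deriv (\<lambda>y. f y / \<phi>1 y) x * \<phi>1 x + (f x / \<phi>1 x) * \<phi>1' x"
        proof -
          have "(deriv f x * \<phi>1 x - f x * \<phi>1' x) / (\<phi>1 x * \<phi>1 x) * \<phi>1 x + (f x / \<phi>1 x) * \<phi>1' x = deriv f x"
            using p1 by (simp add: field_simps)
          thus ?thesis unfolding dg by simp
        qed
        have "\<bar>(deriv (\<lambda>y. f y / \<phi>1 y) x * \<phi>1 x + (f x / \<phi>1 x) * \<phi>1' x) - a1*\<phi>1' x - a2*\<phi>2' x\<bar>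
              \<le> e*(2*C0+1) * \<bar>\<phi>2' x\<bar>"
          apply (rule key[OF p1 p2 C0(1) e])
          using elim(2) apply (simp only: real_norm_def)
          using elim(4) apply (simp only: real_norm_def)
          using elim(3) xD du apply (simp only: real_norm_def simp_thms)
          done
        thus "norm (deriv f x - a1 * \<phi>1' x - a2 * \<phi>2' x) \<le> c * norm (\<phi>2' x)"
          unfolding real_norm_def eq[symmetric] ce .
      qed
    qed
    thus "eventually (\<lambda>x. norm (deriv f x - a1 * \<phi>1' x - a2 * \<phi>2' x) \<le> c * norm (\<phi>2' x)) (inf F (principal D))"
      by (simp add: eventually_inf_principal)
  qed
  show ?thesis using part1 asym by blast
qed

end
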